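(* Let $I_{RPC}=(V,E,T_f,c,p)$ be an RPCSTP instance and let $t_p,t_q,t_{\tilde p},t_{\tilde q}\in T_f$ (not necessarily distinct). Writing $R(t_a,t_b)$ for the feasible region of the LP relaxation of $PrizeRCut(I_{RPC},t_a,t_b)$, we have $$\mathrm{proj}_y\big(R(t_p,t_q)\big)=\mathrm{proj}_y\big(R(t_{\tilde p},t_{\tilde q})\big).$$
   Context: A rooted prize-collecting Steiner tree (RPCSTP) instance $(V,E,T_f,c,p)$ consists of a finite undirected connected graph $(V,E)$, $c:E\to\mathbb{Q}_{>0}$, $p:V\to\mathbb{Q}_{\ge0}$ and a nonempty set $T_f\subseteq V$ of fixed terminals (which must be contained in every feasible solution). Let $T_p:=\{v:p(v)>0\}$ and $T_p\setminus T_f=\{t_1,\dots,t_z\}$. Transformation 2 (RPCSTP to SAP), for $t_a,t_b\in T_f$: set $V':=V$, $A':=\{(v,w),(w,v):\{v,w\}\in E\}$ with $c'((v,w)):=c(\{v,w\})$; for each $i=1,\dots,z$ add a new vertex $t_i'$, an arc $(t_i,t_i')$ of cost $0$ and an arc $(t_a,t_i')$ of cost $p(t_i)$. Terminal set $T':=\{t_1',\dots,t_z'\}\cup T_f$, root $t_b$. The LP relaxation of $PrizeRCut(I_{RPC},t_a,t_b)$ has variables $x\in\mathbb{R}^{A'}$, $y\in\mathbb{R}^{E}$ and constraints: $x(\delta^-(U))\ge1$ for all $U\subset V'$ with $t_b\notin U$, $U\cap T'\neq\emptyset$ (where $\delta^-(U)$ is the set of arcs of $A'$ entering $U$ and $x(F)=\sum_{a\in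 F}x(a)$); $0\le x\le 1$; $y(\{v_i,v_j\})=x((v_i,v_j))+x((v_j,v_i))$ for all $\{v_i,v_j\}\in E$; $0\le y\le1$; objective $\min c'^Tx$. $\mathrm{proj}_y$ denotes projection onto the $y$-variables. *)

theory Defs
  imports Complex_Main
begin

definition rpcstp_instance ::
  "'v set \<Rightarrow> 'v set set \<Rightarrow> 'v set \<Rightarrow> ('v set \<Rightarrow> rat) \<Rightarrow> ('v \<Rightarrow> rat) \<Rightarrow> bool" where
  "rpcstp_instance V E Tf c p \<longleftrightarrow>
     finite V \<and>
     E \<subseteq> {{v, w} | v w. v \<in> V \<and> w \<in> V \<and> v \<noteq> w} \<and>
     (\<forall>v\<in>V. \<forall>w\<in>V. (v, w) \<in> {(a, b). {a, b} \<in> E}\<^sup>*) \<and>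
     (\<forall>e\<in>E. c e > 0) \<and>
     (\<forall>v\<in>V. p v \<ge> 0) \<and>
     Tf \<noteq> {} \<and> Tf \<subseteq> V"

definition prize_terminals :: "'v set \<Rightarrow> ('v \<Rightarrow> rat) \<Rightarrow> 'v set" where
  "prize_terminals V p = {v \<in> V. p v > 0}"

text \<open>Transformation 2: original vertices are Inl v, new vertices t_i' are Inr t_i.\<close>

definition sap_vertices :: "'v set \<Rightarrow> 'v set \<Rightarrow> ('v \<Rightarrow> rat) \<Rightarrow> ('v + 'v) set" where
  "sap_vertices V Tf p = Inl ` V \<union> Inr ` (prize_terminals V p - Tf)"

definition sap_arcs ::
  "'v set \<Rightarrow> 'v set set \<Rightarrow> 'v set \<Rightarrow> ('v \<Rightarrow> rat) \<Rightarrow> 'v \<Rightarrow> (('v + 'v) \<times> ('v + 'v)) set" where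
  "sap_arcs V E Tf p ta =
     {(Inl v, Inl w) | v w. {v, w} \<in> E}
     \<union> {(Inl t, Inr t) | t. t \<in> prize_terminals V p - Tf}
     \<union> {(Inl ta, Inr t) | t. t \<in> prize_terminals V p - Tf}"

definition sap_cost ::
  "('v set \<Rightarrow> rat) \<Rightarrow> ('v \<Rightarrow> rat) \<Rightarrow> 'v \<Rightarrow> ('v + 'v) \<times> ('v + 'v) \<Rightarrow> rat" where
  "sap_cost c p ta a = (case a of
       (Inl v, Inl w) \<Rightarrow> c {v, w}
     | (Inl s, Inr t) \<Rightarrow> (if s = t then 0 else p t)
     | _ \<Rightarrow> 0)"

definition sap_terminals :: "'v set \<Rightarrow> 'v set \<Rightarrow> ('v \<Rightarrow> rat) \<Rightarrow> ('v + 'v) set" where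
  "sap_terminals V Tf p = Inr ` (prize_terminals V p - Tf) \<union> Inl ` Tf"

definition delta_in :: "('a \<times> 'a) set \<Rightarrow> 'a set \<Rightarrow> ('a \<times> 'a) set" where
  "delta_in A U = {a \<in> A. fst a \<notin> U \<and> snd a \<in> U}"

text \<open>Feasible region of the LP relaxation of PrizeRCut(I, t_a, t_b); root is t_b.
  x lives on the arcs A' (zero outside), y on the edges E (zero outside).\<close>

definition prize_rcut_lp_region ::
  "'v set \<Rightarrow> 'v set set \<Rightarrow> 'v set \<Rightarrow> ('v \<Rightarrow> rat) \<Rightarrow> 'v \<Rightarrow> 'v
   \<Rightarrow> ((('v + 'v) \<times> ('v + 'v) \<Rightarrow> real) \<times> ('v set \<Rightarrow> real)) set" where
  "prize_rcut_lp_region V E Tf p ta tb =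
     {(x, y).
        (\<forall>U. U \<subset> sap_vertices V Tf p \<and> Inl tb \<notin> U \<and> U \<inter> sap_terminals V Tf p \<noteq> {}
              \<longrightarrow> (\<Sum>a\<in>delta_in (sap_arcs V E Tf p ta) U. x a) \<ge> 1) \<and>
        (\<forall>a\<in>sap_arcs V E Tf p ta. 0 \<le> x a \<and> x a \<le> 1) \<and>
        (\<forall>a. a \<notin> sap_arcs V E Tf p ta \<longrightarrow> x a = 0) \<and>
        (\<forall>v w. {v, w} \<in> E \<longrightarrow> y {v, w} = x (Inl v, Inl w) + x (Inl w, Inl v)) \<and>
        (\<forall>e\<in>E. 0 \<le> y e \<and> y e \<le> 1) \<and>
        (\<forall>e. e \<notin> E \<longrightarrow> y e = 0)}"

definition proj_y :: "('a \<times> 'b) set \<Rightarrow> 'b set" where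
  "proj_y R = snd ` R"

end

theory Submission imports Defs "HOL-Analysis.Analysis" begin

lemma box_compact:
  fixes lo hi :: "'a \<Rightarrow> real"
  shows "compact {g. \<forall>p. lo p \<le> g p \<and> g p \<le> hi p}"
proof -
  have "{g. \<forall>p. lo p \<le> g p \<and> g p \<le> hi p} = PiE UNIV (\<lambda>p. {lo p..hi p})"
    by (auto simp: PiE_def extensional_def Pi_def)
  moreover have "compactin (product_topology (\<lambda>i. euclidean) UNIV) (PiE UNIV (\<lambda>p. {lo p..hi p}))"
    by (subst compactin_PiE) auto
  then have "compactin euclidean (PiE UNIV (\<lambda>p. {lo p..hi p}))"
    by (simp only: euclidean_product_topology)
  ultimately show ?thesis by simp
qed

lemma coord_cont: "continuous_on S (\<lambda>g::'a\<Rightarrow>real. g i)"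
  by (rule continuous_on_product_then_coordinatewise[OF continuous_on_id])

lemma sum_coord_cont: "continuous_on S (\<lambda>g::'a\<Rightarrow>real. \<Sum>i\<in>I. g (h i))"
  by (rule continuous_on_sum) (rule coord_cont)

definition inflow :: "'v set \<Rightarrow> ('v \<times> 'v \<Rightarrow> real) \<Rightarrow> 'v \<Rightarrow> real" where
  "inflow V g v = (\<Sum>u\<in>V. g (u, v))"

lemma antisym_sum_zero:
  assumes "\<forall>u v. g (u, v) = - g (v, u)"
  shows "(\<Sum>u\<in>W. \<Sum>v\<in>W. g (u, v)) = (0::real)"
proof -
  have "(\<Sum>u\<in>W. \<Sum>v\<in>W. g (u, v)) = (\<Sum>v\<in>W. \<Sum>u\<in>W. g (u, v))"
    by (rule sum.swap)
  also have "\<dots> = (\<Sum>v\<in>W. \<Sum>u\<in>W. - g (v, u))"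
    by (intro sum.cong refl) (rule assms[rule_format])
  also have "\<dots> = - (\<Sum>v\<in>W. \<Sum>u\<in>W. g (v, u))" by (simp add: sum_negf)
  finally show ?thesis by simp
qed

lemma cut_inflow:
  assumes "finite V" "W \<subseteq> V" "\<forall>u v. g (u, v) = - g (v, u)"
  shows "(\<Sum>u\<in>V-W. \<Sum>v\<in>W. g (u, v)) = (\<Sum>v\<in>W. inflow V g v)"
proof -
  have "(\<Sum>v\<in>W. inflow V g v) = (\<Sum>v\<in>W. (\<Sum>u\<in>V-W. g (u, v)) + (\<Sum>u\<in>W. g (u, v)))"
    unfolding inflow_def
    by (intro sum.cong refl) (rule sum.subset_diff[OF assms(2) assms(1)])
  also have "\<dots> = (\<Sum>v\<in>W. \<Sum>u\<in>V-W. g (u, v)) + (\<Sum>v\<in>W. \<Sum>u\<in>W. g (u, v))"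
    by (simp add: sum.distrib)
  also have "(\<Sum>v\<in>W. \<Sum>u\<in>W. g (u, v)) = (\<Sum>u\<in>W. \<Sum>v\<in>W. g (u, v))"
    by (rule sum.swap)
  also have "\<dots> = 0" using antisym_sum_zero[OF assms(3)] .
  also have "(\<Sum>v\<in>W. \<Sum>u\<in>V-W. g (u, v)) = (\<Sum>u\<in>V-W. \<Sum>v\<in>W. g (u, v))"
    by (rule sum.swap)
  finally show ?thesis by simp
qed

lemma lin4: "a = x + X \<Longrightarrow> b = y + Y \<Longrightarrow> x = -y \<Longrightarrow> X = -Y \<Longrightarrow> a = -(b::real)"
  by simp

lemma swap_eq: "((v,u) = (c,b)) = ((u,v) = (b,c))" by blast

lemma sum_ind1: "finite V \<Longrightarrow> c \<in> V \<Longrightarrow> (\<Sum>u\<in>V. (if (u,w) = (c,b) then (e::real) else 0)) = (if w = b then e else 0)"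
  by (cases "w = b") (simp_all add: sum.delta')

lemma st_le: "0 \<le> eps \<Longrightarrow> (if P then eps else 0) - (if Q then eps else (0::real)) \<le> eps" by auto
lemma st_le0: "\<not> P \<Longrightarrow> 0 \<le> eps \<Longrightarrow> (if P then eps else 0) - (if Q then eps else (0::real)) \<le> 0" by auto

lemma walk_aug:
  fixes R :: "('v \<times> 'v) set" and eps :: real
  assumes RV: "R \<subseteq> V \<times> V" and fin: "finite V" and eps: "eps \<ge> 0"
  shows "(a, b) \<in> R ^^ n \<Longrightarrow> \<exists>h. (\<forall>u v. h (u, v) = - h (v, u)) \<and> (\<forall>p. h p \<le> real n * eps)
     \<and> (\<forall>p. h p > 0 \<longrightarrow> p \<in> R)
     \<and> (\<forall>w\<in>V. inflow V h w = eps * ((if w = b then 1 else 0) - (if w = a then 1 else 0)))"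
proof (induction n arbitrary: b)
  case 0
  then have "a = b" by simp
  then show ?case by (intro exI[of _ "\<lambda>p. 0"]) (simp add: inflow_def)
next
  case (Suc n)
  from Suc.prems obtain c where ac: "(a, c) \<in> R ^^ n" and cb: "(c, b) \<in> R"
    by (rule relpow_Suc_E)
  from Suc.IH[OF ac] obtain h where hh: "(\<forall>u v. h (u, v) = - h (v, u)) \<and> (\<forall>p. h p \<le> real n * eps)
    \<and> (\<forall>p. h p > 0 \<longrightarrow> p \<in> R)
    \<and> (\<forall>w\<in>V. inflow V h w = eps * ((if w = c then 1 else 0) - (if w = a then 1 else 0)))" ..
  have h1: "\<forall>u v. h (u, v) = - h (v, u)" using hh by (elim conjE)
  have h2: "\<forall>p. h p \<le> real n * eps" using hh by (elim conjE)
  have h3: "\<forall>p. h p > 0 \<longrightarrow> p \<in> R" using hh by (elim conjE)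
  have h4: "\<forall>w\<in>V. inflow V h w = eps * ((if w = c then 1 else 0) - (if w = a then 1 else 0))" using hh by (elim conjE)
  have cV: "c \<in> V" and bV: "b \<in> V" using cb RV by auto
  define st where "st = (\<lambda>p. (if p = (c, b) then eps else 0) - (if p = (b, c) then eps else 0))"
  define h' where "h' = (\<lambda>p. h p + st p)"
  have A: "\<forall>u v. h' (u, v) = - h' (v, u)"
  proof (intro allI)
    fix u v
    have e: "h (u, v) = - h (v, u)" by (rule h1[rule_format])
    have e2: "st (u, v) = - st (v, u)" unfolding st_def
      by (simp only: swap_eq[of v u c b] swap_eq[of v u b c])
    show "h' (u, v) = - h' (v, u)" unfolding h'_def by (rule lin4[OF refl refl e e2])
  qed
  have B: "\<forall>p. h' p \<le> real (Suc n) * eps"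
  proof
    fix p
    have "st p \<le> eps" unfolding st_def by (rule st_le[OF eps])
    then show "h' p \<le> real (Suc n) * eps"
      using h2[rule_format, of p] unfolding h'_def by (simp add: algebra_simps)
  qed
  have C: "\<forall>p. h' p > 0 \<longrightarrow> p \<in> R"
  proof (intro allI impI)
    fix p assume pos: "h' p > 0"
    show "p \<in> R"
    proof (cases "p = (c, b)")
      case True then show ?thesis using cb by simp
    next
      case False
      have "st p \<le> 0" unfolding st_def by (rule st_le0[OF False eps])
      then have "h p > 0" using pos unfolding h'_def by simp
      then show ?thesis using h3 by blast
    qed
  qed
  have D: "\<forall>w\<in>V. inflow V h' w = eps * ((if w = b then 1 else 0) - (if w = a then 1 else 0))"
  proof
    fix w assume wV: "w \<in> V"
    have s1: "(\<Sum>u\<in>V. (if (u, w) = (c, b) then eps else 0)) = (if w = b then eps else 0)"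
      by (rule sum_ind1[OF fin cV])
    have s2: "(\<Sum>u\<in>V. (if (u, w) = (b, c) then eps else 0)) = (if w = c then eps else 0)"
      by (rule sum_ind1[OF fin bV])
    have "inflow V h' w = inflow V h w + (\<Sum>u\<in>V. (if (u, w) = (c, b) then eps else 0))
            - (\<Sum>u\<in>V. (if (u, w) = (b, c) then eps else 0))"
      unfolding inflow_def h'_def st_def by (simp only: sum.distrib sum_subtractf add_diff_eq)
    also have "\<dots> = eps * ((if w = c then 1 else 0) - (if w = a then 1 else 0)) + (if w = b then eps else 0) - (if w = c then eps else 0)"
      using h4 wV s1 s2 by simp
    also have "\<dots> = eps * ((if w = b then 1 else 0) - (if w = a then 1 else 0))"
      by (simp add: algebra_simps)
    finally show "inflow V h' w = eps * ((if w = b then 1 else 0) - (if w = a then 1 else 0))" .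
  qed
  show ?case by (rule exI[of _ h'], intro conjI, fact A, fact B, fact C, fact D)
qed

lemma maxflow:
  fixes x :: "'v \<times> 'v \<Rightarrow> real"
  assumes fin: "finite V" and xnn: "\<And>p. 0 \<le> x p" and sV: "s \<in> V" and tV: "t \<in> V" and st: "s \<noteq> t"
    and cut: "\<And>W. W \<subseteq> V \<Longrightarrow> s \<notin> W \<Longrightarrow> t \<in> W \<Longrightarrow> 1 \<le> (\<Sum>u\<in>V-W. \<Sum>v\<in>W. x (u, v))"
  shows "\<exists>g. (\<forall>u v. g (u, v) = - g (v, u)) \<and> (\<forall>p. g p \<le> x p)
     \<and> (\<forall>w\<in>V. inflow V g w = (if w = t then 1 else 0) - (if w = s then 1 else 0))"
proof -
  define Box where "Box = {g::'v\<times>'v\<Rightarrow>real. \<forall>p. - x (snd p, fst p) \<le> g p \<and> g p \<le> x p}"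
  define Asym where "Asym = {g::'v\<times>'v\<Rightarrow>real. \<forall>p. g p + g (snd p, fst p) = 0}"
  define Cons where "Cons = {g::'v\<times>'v\<Rightarrow>real. \<forall>w. w \<in> V - {s,t} \<longrightarrow> inflow V g w = 0}"
  define F where "F = Box \<inter> (Asym \<inter> Cons)"
  have cB: "compact Box" unfolding Box_def by (rule box_compact)
  have clA: "closed Asym" unfolding Asym_def
  proof (rule closed_Collect_all)
    fix p :: "'v \<times> 'v"
    show "closed {g::'v\<times>'v\<Rightarrow>real. g p + g (snd p, fst p) = 0}"
      by (rule closed_Collect_eq) (intro continuous_on_add coord_cont, rule continuous_on_const)
  qed
  have clC: "closed Cons" unfolding Cons_def
  proof (rule closed_Collect_all)
    fix w
    show "closed {g::'v\<times>'v\<Rightarrow>real. w \<in> V - {s,t} \<longrightarrow> inflow V g w = 0}"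
    proof (rule closed_Collect_imp)
      show "open {g::'v\<times>'v\<Rightarrow>real. w \<in> V - {s,t}}" by (cases "w \<in> V - {s,t}") simp_all
      show "closed {g::'v\<times>'v\<Rightarrow>real. inflow V g w = 0}" unfolding inflow_def
        by (rule closed_Collect_eq) (rule sum_coord_cont, rule continuous_on_const)
    qed
  qed
  have cF: "compact F" unfolding F_def
    by (rule compact_Int_closed[OF cB closed_Int[OF clA clC]])
  have F0: "(\<lambda>p. 0) \<in> F" unfolding F_def Box_def Asym_def Cons_def
    by (simp add: inflow_def xnn)
  have contv: "continuous_on F (\<lambda>g. inflow V g t)" unfolding inflow_def
    by (rule sum_coord_cont)
  obtain g where gF: "g \<in> F" and gmax: "\<forall>g'\<in>F. inflow V g' t \<le> inflow V g t"
    using continuous_attains_sup[OF cF _ contv] F0 by blast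
  have gA: "\<forall>p. g p + g (snd p, fst p) = 0" using gF unfolding F_def Asym_def by blast
  have gB: "\<forall>p. g p \<le> x p" using gF unfolding F_def Box_def by blast
  have gC: "\<forall>w. w \<in> V - {s,t} \<longrightarrow> inflow V g w = 0" using gF unfolding F_def Cons_def by blast
  have anti: "\<forall>u v. g (u, v) = - g (v, u)"
  proof (intro allI)
    fix u v
    have "g (u, v) + g (v, u) = 0" using gA[rule_format, of "(u, v)"] by simp
    then show "g (u, v) = - g (v, u)" by linarith
  qed
  define R where "R = {(u, v). u \<in> V \<and> v \<in> V \<and> g (u, v) < x (u, v)}"
  define S where "S = {w \<in> V. (s, w) \<in> R\<^sup>*}"
  have RV: "R \<subseteq> V \<times> V" unfolding R_def by auto
  have tS: "t \<notin> S"
  proof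
    assume "t \<in> S"
    then have str: "(s, t) \<in> R\<^sup>*" unfolding S_def by blast
    then obtain n where stn: "(s, t) \<in> R ^^ n" using rtrancl_power by blast
    have Rne: "R \<noteq> {}"
    proof
      assume "R = {}"
      then have "(s, t) \<in> Id" using str by simp
      then show False using st by simp
    qed
    have finR: "finite R" using RV fin by (meson finite_SigmaI finite_subset)
    define r where "r = Min ((\<lambda>p. x p - g p) ` R)"
    have rpos: "r > 0" unfolding r_def
      using finR Rne by (subst Min_gr_iff) (auto simp: R_def)
    have rle: "\<And>p. p \<in> R \<Longrightarrow> r \<le> x p - g p" unfolding r_def using finR by simp
    define eps where "eps = r / (real n + 1)"
    have epos: "eps > 0" unfolding eps_def using rpos by simp
    have neps: "real n * eps < r"
    proof -
      have "real n * eps = r * (real n / (real n + 1))" unfolding eps_def by simp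
      also have "\<dots> < r * 1" using rpos by (intro mult_strict_left_mono) auto
      finally show ?thesis by simp
    qed
    obtain h where hh: "(\<forall>u v. h (u, v) = - h (v, u)) \<and> (\<forall>p. h p \<le> real n * eps)
     \<and> (\<forall>p. h p > 0 \<longrightarrow> p \<in> R)
     \<and> (\<forall>w\<in>V. inflow V h w = eps * ((if w = t then 1 else 0) - (if w = s then 1 else 0)))"
      using walk_aug[OF RV fin less_imp_le[OF epos] stn] ..
    have h1: "\<forall>u v. h (u, v) = - h (v, u)" using hh by (elim conjE)
    have h2: "\<forall>p. h p \<le> real n * eps" using hh by (elim conjE)
    have h3: "\<forall>p. h p > 0 \<longrightarrow> p \<in> R" using hh by (elim conjE)
    have h4: "\<forall>w\<in>V. inflow V h w = eps * ((if w = t then 1 else 0) - (if w = s then 1 else 0))" using hh by (elim conjE)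
    define g' where "g' = (\<lambda>p. g p + h p)"
    have up: "\<forall>p. g' p \<le> x p"
    proof
      fix p
      show "g' p \<le> x p"
      proof (cases "h p > 0")
        case True
        then have "p \<in> R" using h3 by blast
        then have "r \<le> x p - g p" by (rule rle)
        moreover have "h p \<le> real n * eps" using h2 by blast
        ultimately show ?thesis unfolding g'_def using neps by linarith
      next
        case False
        then show ?thesis unfolding g'_def using gB[rule_format, of p] by linarith
      qed
    qed
    have asy: "\<forall>p. g' p + g' (snd p, fst p) = 0"
    proof
      fix p :: "'v \<times> 'v"
      obtain a b where p: "p = (a, b)" by (cases p)
      have "g (a, b) = - g (b, a)" by (rule anti[rule_format])
      moreover have "h (a, b) = - h (b, a)" by (rule h1[rule_format])
      ultimately show "g' p + g' (snd p, fst p) = 0" unfolding g'_def p by simp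
    qed
    have g'F: "g' \<in> F"
    proof -
      have "g' \<in> Box" unfolding Box_def
      proof (intro CollectI allI conjI)
        fix p :: "'v \<times> 'v"
        show "g' p \<le> x p" using up by blast
        have "g' (snd p, fst p) \<le> x (snd p, fst p)" using up by blast
        then show "- x (snd p, fst p) \<le> g' p" using asy[rule_format, of p] by linarith
      qed
      moreover have "g' \<in> Asym" unfolding Asym_def using asy by blast
      moreover have "g' \<in> Cons" unfolding Cons_def
      proof (intro CollectI allI impI)
        fix w assume w: "w \<in> V - {s, t}"
        have "inflow V g' w = inflow V g w + inflow V h w"
          unfolding inflow_def g'_def by (simp add: sum.distrib)
        also have "\<dots> = 0" using gC w h4 by auto
        finally show "inflow V g' w = 0" .
      qed
      ultimately show ?thesis unfolding F_def by blast
    qed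
    have "inflow V g' t = inflow V g t + inflow V h t"
      unfolding inflow_def g'_def by (simp add: sum.distrib)
    also have "\<dots> = inflow V g t + eps" using h4 tV st by simp
    finally have "inflow V g' t > inflow V g t" using epos by simp
    moreover have "inflow V g' t \<le> inflow V g t" using gmax g'F by blast
    ultimately show False by simp
  qed
  define W where "W = V - S"
  have sS: "s \<in> S" unfolding S_def using sV by simp
  have WV: "W \<subseteq> V" and sW: "s \<notin> W" and tW: "t \<in> W" using sS tS tV unfolding W_def by auto
  have finW: "finite W" using WV fin by (rule finite_subset)
  have VW: "V - W = S" unfolding W_def S_def by auto
  have sat: "\<And>u v. u \<in> S \<Longrightarrow> v \<in> W \<Longrightarrow> x (u, v) \<le> g (u, v)"
  proof (rule ccontr)
    fix u v assume uS: "u \<in> S" and vW: "v \<in> W" and "\<not> x (u, v) \<le> g (u, v)"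
    then have uvR: "(u, v) \<in> R" unfolding R_def using WV S_def by auto
    have "(s, u) \<in> R\<^sup>*" using uS unfolding S_def by blast
    from this uvR have "(s, v) \<in> R\<^sup>*" by (rule rtrancl_into_rtrancl)
    then have "v \<in> S" unfolding S_def using vW WV by blast
    then show False using vW unfolding W_def by blast
  qed
  have "1 \<le> (\<Sum>u\<in>V-W. \<Sum>v\<in>W. x (u, v))" by (rule cut[OF WV sW tW])
  also have "\<dots> \<le> (\<Sum>u\<in>V-W. \<Sum>v\<in>W. g (u, v))"
    unfolding VW by (intro sum_mono) (rule sat)
  also have "\<dots> = (\<Sum>v\<in>W. inflow V g v)" by (rule cut_inflow[OF fin WV anti])
  also have "\<dots> = inflow V g t + (\<Sum>v\<in>W - {t}. inflow V g v)" by (rule sum.remove[OF finW tW])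
  also have "(\<Sum>v\<in>W - {t}. inflow V g v) = 0"
  proof (rule sum.neutral, rule ballI)
    fix v assume "v \<in> W - {t}"
    then have "v \<in> V - {s, t}" using WV sW by auto
    then show "inflow V g v = 0" using gC by blast
  qed
  finally have val: "1 \<le> inflow V g t" by simp
  define val where "val = inflow V g t"
  have valpos: "val > 0" using val unfolding val_def by simp
  have tot: "(\<Sum>w\<in>V. inflow V g w) = 0"
  proof -
    have "(\<Sum>w\<in>V. inflow V g w) = (\<Sum>w\<in>V. \<Sum>u\<in>V. g (u, w))" unfolding inflow_def ..
    also have "\<dots> = (\<Sum>u\<in>V. \<Sum>w\<in>V. g (u, w))" by (rule sum.swap)
    also have "\<dots> = 0" by (rule antisym_sum_zero[OF anti])
    finally show ?thesis .
  qed
  have "(\<Sum>w\<in>V. inflow V g w) = inflow V g s + (\<Sum>w\<in>V - {s}. inflow V g w)" by (rule sum.remove[OF fin sV])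
  also have "(\<Sum>w\<in>V - {s}. inflow V g w) = inflow V g t + (\<Sum>w\<in>V - {s} - {t}. inflow V g w)"
    using st tV fin by (intro sum.remove) auto
  also have "(\<Sum>w\<in>V - {s} - {t}. inflow V g w) = 0"
  proof (rule sum.neutral, rule ballI)
    fix v assume "v \<in> V - {s} - {t}"
    then have "v \<in> V - {s, t}" by auto
    then show "inflow V g v = 0" using gC by blast
  qed
  finally have infs: "inflow V g s = - val" using tot unfolding val_def by simp
  define g0 where "g0 = (\<lambda>p. g p / val)"
  have A: "\<forall>u v. g0 (u, v) = - g0 (v, u)"
  proof (intro allI)
    fix u v
    have e: "g (u, v) = - g (v, u)" by (rule anti[rule_format])
    show "g0 (u, v) = - g0 (v, u)" unfolding g0_def by (simp only: e minus_divide_left)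
  qed
  have B: "\<forall>p. g0 p \<le> x p"
  proof
    fix p
    show "g0 p \<le> x p"
    proof (cases "g p > 0")
      case True
      have "g p * 1 \<le> g p * val" using True val unfolding val_def by (intro mult_left_mono) auto
      then have "g p / val \<le> g p" using valpos by (simp add: divide_le_eq)
      then show ?thesis unfolding g0_def using gB by (meson order_trans)
    next
      case False
      then have "g p / val \<le> 0" using valpos by (simp add: divide_nonpos_pos)
      then show ?thesis unfolding g0_def using xnn[of p] by linarith
    qed
  qed
  have C: "\<forall>w\<in>V. inflow V g0 w = (if w = t then 1 else 0) - (if w = s then 1 else 0)"
  proof
    fix w assume wV: "w \<in> V"
    have i: "inflow V g0 w = inflow V g w / val" unfolding inflow_def g0_def by (simp add: sum_divide_distrib)
    show "inflow V g0 w = (if w = t then 1 else 0) - (if w = s then 1 else 0)"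
    proof (cases "w = t")
      case True then show ?thesis using i st valpos unfolding val_def by simp
    next
      case False
      show ?thesis
      proof (cases "w = s")
        case True then show ?thesis using i st valpos infs False by simp
      next
        case False2: False
        then have "inflow V g w = 0" using gC wV False by blast
        then show ?thesis using i False False2 by simp
      qed
    qed
  qed
  show ?thesis using A B C by blast
qed

lemma root_change:
  fixes xl :: "'v \<times> 'v \<Rightarrow> real"
  assumes fin: "finite V" and symEd: "\<And>u v. (u, v) \<in> Ed \<Longrightarrow> (v, u) \<in> Ed"
   and xnn: "\<And>p. 0 \<le> xl p" and xE: "\<And>p. p \<notin> Ed \<Longrightarrow> xl p = 0" and sV: "s \<in> V"
   and tT: "t \<in> T" and TV: "T \<subseteq> V"
   and cut: "\<And>W. W \<subseteq> V \<Longrightarrow> s \<notin> W \<Longrightarrow> W \<inter> T \<noteq> {} \<Longrightarrow> 1 \<le> (\<Sum>u\<in>V-W. \<Sum>v\<in>W. xl (u, v))"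
  shows "\<exists>xl'. (\<forall>p. 0 \<le> xl' p) \<and> (\<forall>p. p \<notin> Ed \<longrightarrow> xl' p = 0)
     \<and> (\<forall>u v. xl' (u, v) + xl' (v, u) = xl (u, v) + xl (v, u))
     \<and> (\<forall>W. W \<subseteq> V \<longrightarrow> t \<notin> W \<longrightarrow> W \<inter> T \<noteq> {} \<longrightarrow> 1 \<le> (\<Sum>u\<in>V-W. \<Sum>v\<in>W. xl' (u, v)))"
proof (cases "s = t")
  case True
  have "\<forall>W. W \<subseteq> V \<longrightarrow> t \<notin> W \<longrightarrow> W \<inter> T \<noteq> {} \<longrightarrow> 1 \<le> (\<Sum>u\<in>V-W. \<Sum>v\<in>W. xl (u, v))"
    using cut True by blast
  moreover have "\<forall>p. 0 \<le> xl p" using xnn by blast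
  moreover have "\<forall>p. p \<notin> Ed \<longrightarrow> xl p = 0" using xE by blast
  ultimately show ?thesis by (intro exI[of _ xl]) blast
next
  case False
  have tV: "t \<in> V" using tT TV by blast
  have cut': "\<And>W. W \<subseteq> V \<Longrightarrow> s \<notin> W \<Longrightarrow> t \<in> W \<Longrightarrow> 1 \<le> (\<Sum>u\<in>V-W. \<Sum>v\<in>W. xl (u, v))"
    using cut tT by blast
  obtain g where gg: "(\<forall>u v. g (u, v) = - g (v, u)) \<and> (\<forall>p. g p \<le> xl p)
     \<and> (\<forall>w\<in>V. inflow V g w = (if w = t then 1 else 0) - (if w = s then 1 else 0))"
    using maxflow[OF fin xnn sV tV False cut'] ..
  have anti: "\<forall>u v. g (u, v) = - g (v, u)" using gg by (elim conjE)
  have gle: "\<forall>p. g p \<le> xl p" using gg by (elim conjE)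
  have gin: "\<forall>w\<in>V. inflow V g w = (if w = t then 1 else 0) - (if w = s then 1 else 0)" using gg by (elim conjE)
  define xl' where "xl' = (\<lambda>p. xl p - g p)"
  have A: "\<forall>p. 0 \<le> xl' p" unfolding xl'_def using gle by (simp add: algebra_simps)
  have B: "\<forall>p. p \<notin> Ed \<longrightarrow> xl' p = 0"
  proof (intro allI impI)
    fix p assume pE: "p \<notin> Ed"
    obtain a b where p: "p = (a, b)" by (cases p)
    have "(b, a) \<notin> Ed" using pE p symEd by blast
    then have "xl (b, a) = 0" by (rule xE)
    moreover have "xl (a, b) = 0" using xE pE p by blast
    moreover have "g (a, b) \<le> xl (a, b)" using gle by blast
    moreover have "g (b, a) \<le> xl (b, a)" using gle by blast
    moreover have "g (a, b) = - g (b, a)" by (rule anti[rule_format])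
    ultimately show "xl' p = 0" unfolding xl'_def p by linarith
  qed
  have C: "\<forall>u v. xl' (u, v) + xl' (v, u) = xl (u, v) + xl (v, u)"
  proof (intro allI)
    fix u v
    have "g (u, v) = - g (v, u)" by (rule anti[rule_format])
    then show "xl' (u, v) + xl' (v, u) = xl (u, v) + xl (v, u)" unfolding xl'_def by linarith
  qed
  have D: "\<forall>W. W \<subseteq> V \<longrightarrow> t \<notin> W \<longrightarrow> W \<inter> T \<noteq> {} \<longrightarrow> 1 \<le> (\<Sum>u\<in>V-W. \<Sum>v\<in>W. xl' (u, v))"
  proof (intro allI impI)
    fix W assume WV: "W \<subseteq> V" and tW: "t \<notin> W" and WT: "W \<inter> T \<noteq> {}"
    have finW: "finite W" using WV fin by (rule finite_subset)
    have "(\<Sum>u\<in>V-W. \<Sum>v\<in>W. xl' (u, v)) = (\<Sum>u\<in>V-W. \<Sum>v\<in>W. xl (u, v)) - (\<Sum>u\<in>V-W. \<Sum>v\<in>W. g (u, v))"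
      unfolding xl'_def by (simp add: sum_subtractf)
    also have "(\<Sum>u\<in>V-W. \<Sum>v\<in>W. g (u, v)) = (\<Sum>v\<in>W. inflow V g v)"
      by (rule cut_inflow[OF fin WV anti])
    also have "\<dots> = (\<Sum>v\<in>W. (if v = t then 1 else 0) - (if v = s then 1 else 0))"
      using WV gin by (intro sum.cong refl) blast
    also have "\<dots> = - (if s \<in> W then 1 else 0)"
      using finW tW by (simp add: sum_subtractf sum.delta)
    finally have eq: "(\<Sum>u\<in>V-W. \<Sum>v\<in>W. xl' (u, v)) = (\<Sum>u\<in>V-W. \<Sum>v\<in>W. xl (u, v)) + (if s \<in> W then 1 else 0)"
      by simp
    show "1 \<le> (\<Sum>u\<in>V-W. \<Sum>v\<in>W. xl' (u, v))"
    proof (cases "s \<in> W")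
      case True
      have "0 \<le> (\<Sum>u\<in>V-W. \<Sum>v\<in>W. xl (u, v))" by (intro sum_nonneg xnn)
      then show ?thesis using eq True by simp
    next
      case False
      then show ?thesis using eq cut[OF WV False WT] by simp
    qed
  qed
  show ?thesis by (rule exI[of _ xl'], intro conjI, fact A, fact B, fact C, fact D)
qed

lemma inl_arc: "(Inl u, Inl v) \<in> sap_arcs V E Tf p ta \<longleftrightarrow> {u, v} \<in> E"
  unfolding sap_arcs_def by auto

lemma inr_arc: "(Inl u, Inr t) \<in> sap_arcs V E Tf p ta \<longleftrightarrow> t \<in> prize_terminals V p - Tf \<and> (u = t \<or> u = ta)"
  unfolding sap_arcs_def by auto

lemma edge_in_V:
  assumes EV: "E \<subseteq> {{v, w} | v w. v \<in> V \<and> w \<in> V \<and> v \<noteq> w}" and e: "{u, v} \<in> E"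
  shows "u \<in> V \<and> v \<in> V"
proof -
  from e EV obtain a b where ab: "{u, v} = {a, b}" "a \<in> V" "b \<in> V" by blast
  have "u \<in> {a, b}" using ab(1) by (metis insertI1)
  moreover have "v \<in> {a, b}" using ab(1) by (metis insertI1 insert_commute)
  ultimately show ?thesis using ab(2,3) by blast
qed

lemma finite_arcs:
  assumes fin: "finite V" and EV: "E \<subseteq> {{v, w} | v w. v \<in> V \<and> w \<in> V \<and> v \<noteq> w}"
  shows "finite (sap_arcs V E Tf p ta)"
proof -
  let ?B = "Inl ` (insert ta V) \<union> Inr ` V"
  have "sap_arcs V E Tf p ta \<subseteq> ?B \<times> ?B"
  proof
    fix a assume a: "a \<in> sap_arcs V E Tf p ta"
    show "a \<in> ?B \<times> ?B"
    proof (cases "a \<in> {(Inl v, Inl w) | v w. {v, w} \<in> E}")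
      case True
      then obtain v w where vw: "a = (Inl v, Inl w)" "{v, w} \<in> E" by blast
      then have "v \<in> V \<and> w \<in> V" using edge_in_V[OF EV] by blast
      then show ?thesis using vw by blast
    next
      case False
      then obtain u t where ut: "a = (Inl u, Inr t)" "t \<in> prize_terminals V p - Tf" "u = t \<or> u = ta"
        using a unfolding sap_arcs_def by blast
      have tV: "t \<in> V" using ut(2) unfolding prize_terminals_def by blast
      then have "u \<in> insert ta V" using ut(3) by blast
      then show ?thesis using ut(1) tV by blast
    qed
  qed
  moreover have "finite (?B \<times> ?B)" using fin by simp
  ultimately show ?thesis by (rule finite_subset)
qed

lemma cutsum:
  fixes x :: "('v + 'v) \<times> ('v + 'v) \<Rightarrow> real"
  assumes fin: "finite V" and EV: "E \<subseteq> {{v, w} | v w. v \<in> V \<and> w \<in> V \<and> v \<noteq> w}"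
    and WV: "W \<subseteq> V" and x0: "\<forall>a. a \<notin> sap_arcs V E Tf p ta \<longrightarrow> x a = 0"
  shows "(\<Sum>a\<in>delta_in (sap_arcs V E Tf p ta) (Inl ` W). x a) = (\<Sum>u\<in>V-W. \<Sum>v\<in>W. x (Inl u, Inl v))"
proof -
  define D0 where "D0 = {(u, v). {u, v} \<in> E \<and> u \<notin> W \<and> v \<in> W}"
  define f where "f = (\<lambda>(u::'v, v::'v). (Inl u, Inl v) :: ('v + 'v) \<times> ('v + 'v))"
  have D: "delta_in (sap_arcs V E Tf p ta) (Inl ` W) = f ` D0"
  proof
    show "delta_in (sap_arcs V E Tf p ta) (Inl ` W) \<subseteq> f ` D0"
    proof
      fix a assume a: "a \<in> delta_in (sap_arcs V E Tf p ta) (Inl ` W)"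
      then have aA: "a \<in> sap_arcs V E Tf p ta" and f1: "fst a \<notin> Inl ` W" and s1: "snd a \<in> Inl ` W"
        unfolding delta_in_def by auto
      from s1 obtain v where v: "snd a = Inl v" "v \<in> W" by blast
      have "\<exists>u. fst a = Inl u" using aA unfolding sap_arcs_def by fastforce
      then obtain u where u: "fst a = Inl u" by blast
      have ae: "a = (Inl u, Inl v)" using u v(1) by (metis prod.collapse)
      have "{u, v} \<in> E" using aA ae inl_arc by metis
      moreover have "u \<notin> W" using f1 u by auto
      ultimately show "a \<in> f ` D0" unfolding D0_def f_def using ae v by auto
    qed
    show "f ` D0 \<subseteq> delta_in (sap_arcs V E Tf p ta) (Inl ` W)"
    proof
      fix a assume "a \<in> f ` D0"
      then obtain q where qD: "q \<in> D0" and aq: "a = f q" by blast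
      obtain u v where q: "q = (u, v)" by (cases q)
      have a: "a = (Inl u, Inl v)" "{u, v} \<in> E" "u \<notin> W" "v \<in> W"
        using qD aq q unfolding D0_def f_def by auto
      have "a \<in> sap_arcs V E Tf p ta" using a(1,2) inl_arc by metis
      moreover have "fst a \<notin> Inl ` W" using a(1,3) by auto
      moreover have "snd a \<in> Inl ` W" using a(1,4) by auto
      ultimately show "a \<in> delta_in (sap_arcs V E Tf p ta) (Inl ` W)" unfolding delta_in_def by blast
    qed
  qed
  have inj: "inj_on f D0" unfolding f_def inj_on_def by auto
  have "(\<Sum>a\<in>delta_in (sap_arcs V E Tf p ta) (Inl ` W). x a) = (\<Sum>q\<in>D0. x (f q))"
    unfolding D by (rule sum.reindex[OF inj, unfolded comp_def])
  also have "\<dots> = (\<Sum>q\<in>(V-W)\<times>W. x (f q))"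
  proof (rule sum.mono_neutral_left)
    show "finite ((V - W) \<times> W)" using fin WV by (meson finite_Diff finite_SigmaI finite_subset)
    show "D0 \<subseteq> (V - W) \<times> W"
    proof
      fix q assume "q \<in> D0"
      then obtain u v where q: "q = (u, v)" "{u, v} \<in> E" "u \<notin> W" "v \<in> W" unfolding D0_def by auto
      have "u \<in> V" using edge_in_V[OF EV q(2)] by blast
      then show "q \<in> (V - W) \<times> W" using q by auto
    qed
    show "\<forall>i\<in>(V - W) \<times> W - D0. x (f i) = 0"
    proof
      fix q assume "q \<in> (V - W) \<times> W - D0"
      then obtain u v where q: "q = (u, v)" "{u, v} \<notin> E" unfolding D0_def by auto
      then have "(Inl u, Inl v) \<notin> sap_arcs V E Tf p ta" using inl_arc by metis
      then show "x (f q) = 0" using x0 q unfolding f_def by simp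
    qed
  qed
  also have "\<dots> = (\<Sum>q\<in>(V-W)\<times>W. (\<lambda>(u, v). x (Inl u, Inl v)) q)"
    by (intro sum.cong refl) (auto simp: f_def)
  also have "\<dots> = (\<Sum>u\<in>V-W. \<Sum>v\<in>W. x (Inl u, Inl v))"
    by (rule sum.cartesian_product[symmetric])
  finally show ?thesis .
qed

lemma arc_fst: "a \<in> sap_arcs V E Tf p ta \<Longrightarrow> \<exists>u. fst a = Inl u"
  unfolding sap_arcs_def by fastforce

lemma incl:
  fixes x :: "('v + 'v) \<times> ('v + 'v) \<Rightarrow> real" and y :: "'v set \<Rightarrow> real"
  assumes inst: "rpcstp_instance V E Tf c p" and taT: "ta \<in> Tf" and tbT: "tb \<in> Tf"
    and ta'T: "ta' \<in> Tf" and tb'T: "tb' \<in> Tf"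
    and xy: "(x, y) \<in> prize_rcut_lp_region V E Tf p ta tb"
  shows "y \<in> proj_y (prize_rcut_lp_region V E Tf p ta' tb')"
proof -
  have fin: "finite V" using inst unfolding rpcstp_instance_def by blast
  have EV: "E \<subseteq> {{v, w} | v w. v \<in> V \<and> w \<in> V \<and> v \<noteq> w}" using inst unfolding rpcstp_instance_def by blast
  have TfV: "Tf \<subseteq> V" using inst unfolding rpcstp_instance_def by blast
  let ?A = "sap_arcs V E Tf p ta"
  let ?A' = "sap_arcs V E Tf p ta'"
  let ?SV = "sap_vertices V Tf p"
  let ?ST = "sap_terminals V Tf p"
  have all: "(\<forall>U. U \<subset> ?SV \<and> Inl tb \<notin> U \<and> U \<inter> ?ST \<noteq> {}
              \<longrightarrow> (\<Sum>a\<in>delta_in ?A U. x a) \<ge> 1) \<and>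
        (\<forall>a\<in>?A. 0 \<le> x a \<and> x a \<le> 1) \<and>
        (\<forall>a. a \<notin> ?A \<longrightarrow> x a = 0) \<and>
        (\<forall>v w. {v, w} \<in> E \<longrightarrow> y {v, w} = x (Inl v, Inl w) + x (Inl w, Inl v)) \<and>
        (\<forall>e\<in>E. 0 \<le> y e \<and> y e \<le> 1) \<and>
        (\<forall>e. e \<notin> E \<longrightarrow> y e = 0)"
    using xy unfolding prize_rcut_lp_region_def by simp
  have xcut: "\<forall>U. U \<subset> ?SV \<and> Inl tb \<notin> U \<and> U \<inter> ?ST \<noteq> {}
              \<longrightarrow> (\<Sum>a\<in>delta_in ?A U. x a) \<ge> 1" using all by (elim conjE)
  have xb: "\<forall>a\<in>?A. 0 \<le> x a \<and> x a \<le> 1" using all by (elim conjE)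
  have x0: "\<forall>a. a \<notin> ?A \<longrightarrow> x a = 0" using all by (elim conjE)
  have yx: "\<forall>v w. {v, w} \<in> E \<longrightarrow> y {v, w} = x (Inl v, Inl w) + x (Inl w, Inl v)" using all by (elim conjE)
  have yb: "\<forall>e\<in>E. 0 \<le> y e \<and> y e \<le> 1" using all by (elim conjE)
  have y0: "\<forall>e. e \<notin> E \<longrightarrow> y e = 0" using all by (elim conjE)
  have xnn0: "\<And>a. 0 \<le> x a"
  proof -
    fix a show "0 \<le> x a"
    proof (cases "a \<in> ?A")
      case True then show ?thesis using xb by blast
    next
      case False then have "x a = 0" using x0 by blast
      then show ?thesis by simp
    qed
  qed
  define Ed where "Ed = {(u, v). {u, v} \<in> E}"
  define xl where "xl = (\<lambda>q. x (Inl (fst q), Inl (snd q)))"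
  have symEd: "\<And>u v. (u, v) \<in> Ed \<Longrightarrow> (v, u) \<in> Ed" unfolding Ed_def by (simp add: insert_commute)
  have xlnn: "\<And>q. 0 \<le> xl q" unfolding xl_def by (rule xnn0)
  have xlE: "\<And>q. q \<notin> Ed \<Longrightarrow> xl q = 0"
  proof -
    fix q :: "'v \<times> 'v" assume "q \<notin> Ed"
    then have "{fst q, snd q} \<notin> E" unfolding Ed_def by (cases q) simp
    then have "(Inl (fst q), Inl (snd q)) \<notin> ?A" using inl_arc by metis
    then show "xl q = 0" unfolding xl_def using x0 by blast
  qed
  have tbV: "tb \<in> V" using tbT TfV by blast
  have xlcut: "\<And>W. W \<subseteq> V \<Longrightarrow> tb \<notin> W \<Longrightarrow> W \<inter> Tf \<noteq> {} \<Longrightarrow> 1 \<le> (\<Sum>u\<in>V-W. \<Sum>v\<in>W. xl (u, v))"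
  proof -
    fix W assume WV: "W \<subseteq> V" and tbW: "tb \<notin> W" and WT: "W \<inter> Tf \<noteq> {}"
    let ?U = "Inl ` W :: ('v + 'v) set"
    have "?U \<subseteq> ?SV" using WV unfolding sap_vertices_def by blast
    moreover have "Inl tb \<in> ?SV" using tbV unfolding sap_vertices_def by blast
    moreover have tbU: "Inl tb \<notin> ?U" using tbW by blast
    ultimately have psub: "?U \<subset> ?SV" by blast
    from WT obtain tf where tf: "tf \<in> W" "tf \<in> Tf" by blast
    have "Inl tf \<in> ?U \<inter> ?ST" using tf unfolding sap_terminals_def by blast
    then have UT: "?U \<inter> ?ST \<noteq> {}" by blast
    have "1 \<le> (\<Sum>a\<in>delta_in ?A ?U. x a)" using xcut psub tbU UT by blast
    also have "\<dots> = (\<Sum>u\<in>V-W. \<Sum>v\<in>W. x (Inl u, Inl v))" by (rule cutsum[OF fin EV WV x0])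
    also have "\<dots> = (\<Sum>u\<in>V-W. \<Sum>v\<in>W. xl (u, v))" unfolding xl_def by simp
    finally show "1 \<le> (\<Sum>u\<in>V-W. \<Sum>v\<in>W. xl (u, v))" .
  qed
  obtain xl' where xx: "(\<forall>p. 0 \<le> xl' p) \<and> (\<forall>p. p \<notin> Ed \<longrightarrow> xl' p = 0)
     \<and> (\<forall>u v. xl' (u, v) + xl' (v, u) = xl (u, v) + xl (v, u))
     \<and> (\<forall>W. W \<subseteq> V \<longrightarrow> tb' \<notin> W \<longrightarrow> W \<inter> Tf \<noteq> {} \<longrightarrow> 1 \<le> (\<Sum>u\<in>V-W. \<Sum>v\<in>W. xl' (u, v)))"
    using root_change[OF fin symEd xlnn xlE tbV tb'T TfV xlcut] by blast
  have xl'nn: "\<forall>p. 0 \<le> xl' p" using xx by (elim conjE)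
  have xl'E: "\<forall>p. p \<notin> Ed \<longrightarrow> xl' p = 0" using xx by (elim conjE)
  have xl'sum: "\<forall>u v. xl' (u, v) + xl' (v, u) = xl (u, v) + xl (v, u)" using xx by (elim conjE)
  have xl'cut: "\<forall>W. W \<subseteq> V \<longrightarrow> tb' \<notin> W \<longrightarrow> W \<inter> Tf \<noteq> {} \<longrightarrow> 1 \<le> (\<Sum>u\<in>V-W. \<Sum>v\<in>W. xl' (u, v))"
    using xx by (elim conjE)
  define x' where "x' = (\<lambda>a::('v + 'v) \<times> ('v + 'v). case a of
       (Inl u, Inl v) \<Rightarrow> xl' (u, v)
     | (Inl u, Inr t) \<Rightarrow> (if (Inl u, Inr t) \<in> ?A' then 1 else 0)
     | (Inr u, w) \<Rightarrow> 0)"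
  have x'll: "\<And>u v. x' (Inl u, Inl v) = xl' (u, v)" unfolding x'_def by simp
  have x'lr: "\<And>u t. x' (Inl u, Inr t) = (if (Inl u, Inr t) \<in> ?A' then 1 else 0)" unfolding x'_def by simp
  have x'r: "\<And>u w. x' (Inr u, w) = 0" unfolding x'_def by simp
  have x'nn: "\<And>a. 0 \<le> x' a"
  proof -
    fix a :: "('v + 'v) \<times> ('v + 'v)"
    obtain a1 a2 where a: "a = (a1, a2)" by (cases a)
    show "0 \<le> x' a"
    proof (cases a1)
      case (Inl u)
      show ?thesis
      proof (cases a2)
        case (Inl v) then show ?thesis using a \<open>a1 = Inl u\<close> x'll xl'nn by simp
      next
        case (Inr t) then show ?thesis using a \<open>a1 = Inl u\<close> x'lr by simp
      qed
    next
      case (Inr u) then show ?thesis using a x'r by simp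
    qed
  qed
  have P3: "\<forall>a. a \<notin> ?A' \<longrightarrow> x' a = 0"
  proof (intro allI impI)
    fix a :: "('v + 'v) \<times> ('v + 'v)" assume aA: "a \<notin> ?A'"
    obtain a1 a2 where a: "a = (a1, a2)" by (cases a)
    show "x' a = 0"
    proof (cases a1)
      case (Inl u)
      show ?thesis
      proof (cases a2)
        case (Inl v)
        then have "{u, v} \<notin> E" using aA a \<open>a1 = Inl u\<close> inl_arc by metis
        then have "(u, v) \<notin> Ed" unfolding Ed_def by simp
        then show ?thesis using a \<open>a1 = Inl u\<close> Inl x'll xl'E by simp
      next
        case (Inr t) then show ?thesis using a \<open>a1 = Inl u\<close> x'lr aA by simp
      qed
    next
      case (Inr u) then show ?thesis using a x'r by simp
    qed
  qed
  have P4: "\<forall>v w. {v, w} \<in> E \<longrightarrow> y {v, w} = x' (Inl v, Inl w) + x' (Inl w, Inl v)"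
  proof (intro allI impI)
    fix v w assume e: "{v, w} \<in> E"
    have "x' (Inl v, Inl w) + x' (Inl w, Inl v) = xl' (v, w) + xl' (w, v)" by (simp only: x'll)
    also have "\<dots> = xl (v, w) + xl (w, v)" using xl'sum by blast
    also have "\<dots> = x (Inl v, Inl w) + x (Inl w, Inl v)" unfolding xl_def by simp
    also have "\<dots> = y {v, w}" using yx e by simp
    finally show "y {v, w} = x' (Inl v, Inl w) + x' (Inl w, Inl v)" by simp
  qed
  have P2: "\<forall>a\<in>?A'. 0 \<le> x' a \<and> x' a \<le> 1"
  proof
    fix a assume aA: "a \<in> ?A'"
    have "x' a \<le> 1"
    proof -
      obtain a1 a2 where a: "a = (a1, a2)" by (cases a)
      obtain u where u: "a1 = Inl u" using arc_fst[OF aA] a by auto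
      show ?thesis
      proof (cases a2)
        case (Inl v)
        then have e: "{u, v} \<in> E" using aA a u inl_arc by metis
        have "x' a = xl' (u, v)" using a u Inl x'll by simp
        also have "\<dots> \<le> xl' (u, v) + xl' (v, u)" using xl'nn by (simp add: add_increasing2)
        also have "\<dots> = x' (Inl u, Inl v) + x' (Inl v, Inl u)" by (simp only: x'll)
        also have "\<dots> = y {u, v}" using P4 e by simp
        also have "\<dots> \<le> 1" using yb e by blast
        finally show ?thesis .
      next
        case (Inr t) then show ?thesis using a u x'lr by simp
      qed
    qed
    then show "0 \<le> x' a \<and> x' a \<le> 1" using x'nn by simp
  qed
  have finA': "finite ?A'" by (rule finite_arcs[OF fin EV])
  have P1: "\<forall>U. U \<subset> ?SV \<and> Inl tb' \<notin> U \<and> U \<inter> ?ST \<noteq> {}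
              \<longrightarrow> (\<Sum>a\<in>delta_in ?A' U. x' a) \<ge> 1"
  proof (intro allI impI)
    fix U assume H: "U \<subset> ?SV \<and> Inl tb' \<notin> U \<and> U \<inter> ?ST \<noteq> {}"
    then have USV: "U \<subseteq> ?SV" and tbU: "Inl tb' \<notin> U" and UT: "U \<inter> ?ST \<noteq> {}" by auto
    have findel: "finite (delta_in ?A' U)" using finA' unfolding delta_in_def by simp
    define W where "W = {v. Inl v \<in> U}"
    have WV: "W \<subseteq> V"
    proof
      fix v assume "v \<in> W"
      then have "Inl v \<in> ?SV" using USV unfolding W_def by blast
      then show "v \<in> V" unfolding sap_vertices_def by blast
    qed
    show "1 \<le> (\<Sum>a\<in>delta_in ?A' U. x' a)"
    proof (cases "W \<inter> Tf = {}")
      case False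
      have tbW: "tb' \<notin> W" using tbU unfolding W_def by blast
      have "1 \<le> (\<Sum>u\<in>V-W. \<Sum>v\<in>W. xl' (u, v))" using xl'cut WV tbW False by blast
      also have "\<dots> = (\<Sum>u\<in>V-W. \<Sum>v\<in>W. x' (Inl u, Inl v))" by (simp only: x'll)
      also have "\<dots> = (\<Sum>a\<in>delta_in ?A' (Inl ` W). x' a)" by (rule cutsum[OF fin EV WV P3, symmetric])
      also have "\<dots> \<le> (\<Sum>a\<in>delta_in ?A' U. x' a)"
      proof (rule sum_mono2[OF findel])
        show "delta_in ?A' (Inl ` W) \<subseteq> delta_in ?A' U"
        proof
          fix a assume a: "a \<in> delta_in ?A' (Inl ` W)"
          then have aA: "a \<in> ?A'" and f1: "fst a \<notin> Inl ` W" and s1: "snd a \<in> Inl ` W"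
            unfolding delta_in_def by auto
          obtain u where u: "fst a = Inl u" using arc_fst[OF aA] by blast
          have "u \<notin> W" using f1 u by auto
          then have "fst a \<notin> U" using u unfolding W_def by simp
          moreover have "snd a \<in> U" using s1 unfolding W_def by auto
          ultimately show "a \<in> delta_in ?A' U" using aA unfolding delta_in_def by simp
        qed
        show "\<And>b. b \<in> delta_in ?A' U - delta_in ?A' (Inl ` W) \<Longrightarrow> 0 \<le> x' b" by (rule x'nn)
      qed
      finally show ?thesis .
    next
      case True
      from UT obtain z where zU: "z \<in> U" and zT: "z \<in> ?ST" by blast
      have "\<not> (\<exists>tf\<in>Tf. z = Inl tf)"
      proof
        assume "\<exists>tf\<in>Tf. z = Inl tf"
        then obtain tf where "tf \<in> Tf" "z = Inl tf" by blast
        then have "tf \<in> W \<inter> Tf" using zU unfolding W_def by simp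
        then show False using True by blast
      qed
      then obtain t where zt: "z = Inr t" and tP: "t \<in> prize_terminals V p - Tf"
        using zT unfolding sap_terminals_def by blast
      have taU: "Inl ta' \<notin> U"
      proof
        assume "Inl ta' \<in> U"
        then have "ta' \<in> W \<inter> Tf" using ta'T unfolding W_def by simp
        then show False using True by blast
      qed
      define a0 :: "('v + 'v) \<times> ('v + 'v)" where "a0 = (if Inl t \<in> U then (Inl ta', Inr t) else (Inl t, Inr t))"
      have a0A: "a0 \<in> ?A'" unfolding a0_def using tP inr_arc by (simp add: inr_arc)
      have a0d: "a0 \<in> delta_in ?A' U" unfolding delta_in_def using a0A zU zt taU a0_def by auto
      have "x' a0 = 1"
      proof (cases "Inl t \<in> U")
        case True then show ?thesis using a0A unfolding a0_def by (simp add: x'lr)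
      next
        case False then show ?thesis using a0A unfolding a0_def by (simp add: x'lr)
      qed
      moreover have "x' a0 \<le> (\<Sum>a\<in>delta_in ?A' U. x' a)"
        by (rule member_le_sum[OF a0d _ findel]) (rule x'nn)
      ultimately show ?thesis by simp
    qed
  qed
  have "(x', y) \<in> prize_rcut_lp_region V E Tf p ta' tb'"
    unfolding prize_rcut_lp_region_def mem_Collect_eq case_prod_conv
    by (intro conjI, fact P1, fact P2, fact P3, fact P4, fact yb, fact y0)
  then show ?thesis unfolding proj_y_def by (rule image_eqI[rotated]) simp
qed

theorem proposition7:
  fixes V :: "'v set" and E :: "'v set set" and Tf :: "'v set"
    and c :: "'v set \<Rightarrow> rat" and p :: "'v \<Rightarrow> rat"
    and tp tq tp' tq' :: 'v
  assumes "rpcstp_instance V E Tf c p"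
    and "tp \<in> Tf" and "tq \<in> Tf" and "tp' \<in> Tf" and "tq' \<in> Tf"
  shows "proj_y (prize_rcut_lp_region V E Tf p tp tq)
         = proj_y (prize_rcut_lp_region V E Tf p tp' tq')"
proof
  show "proj_y (prize_rcut_lp_region V E Tf p tp tq) \<subseteq> proj_y (prize_rcut_lp_region V E Tf p tp' tq')"
  proof
    fix y assume "y \<in> proj_y (prize_rcut_lp_region V E Tf p tp tq)"
    then obtain x where "(x, y) \<in> prize_rcut_lp_region V E Tf p tp tq" unfolding proj_y_def by force
    then show "y \<in> proj_y (prize_rcut_lp_region V E Tf p tp' tq')" by (rule incl[OF assms])
  qed
  show "proj_y (prize_rcut_lp_region V E Tf p tp' tq') \<subseteq> proj_y (prize_rcut_lp_region V E Tf p tp tq)"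
  proof
    fix y assume "y \<in> proj_y (prize_rcut_lp_region V E Tf p tp' tq')"
    then obtain x where "(x, y) \<in> prize_rcut_lp_region V E Tf p tp' tq'" unfolding proj_y_def by force
    then show "y \<in> proj_y (prize_rcut_lp_region V E Tf p tp tq)" by (rule incl[OF assms(1) assms(4,5,2,3)])
  qed
qed

end
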